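(* Let $k\ge 4$ and let $w$ be a minimal uncompletable word for $S_k$. Then $u=ba^{k-1}$ is a prefix of $w$ and $v=b^{k-1}a$ is a suffix of $w$.
   Context: $\Sigma=\{a,b\}$. $S_k=\left(\Sigma^k\setminus\{ba^{k-1},b^{k-1}a\}\right)\cup\left(\Sigma^{k-1}\setminus\{a^{k-1},b^{k-1}\}\right)$. $\mathit{Fact}(S^* )$ is the set of all factors of words in $S^*$. A word $w\in\Sigma^*\setminus\mathit{Fact}(S_k^* )$ is uncompletable for $S_k$; a minimal uncompletable word is an uncompletable word of minimal possible length (such words exist for $k\ge 4$ since $S_k$ is then not complete). *)

theory Defs
  imports Main
begin

datatype letter = a | b

definition S :: "nat \<Rightarrow> letter list set" where
  "S k = ({w. length w = k} - {b # replicate (k-1) a, replicate (k-1) b @ [a]})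
        \<union> ({w. length w = k - 1} - {replicate (k-1) a, replicate (k-1) b})"

definition star :: "'x list set \<Rightarrow> 'x list set" where
  "star L = {concat ws | ws. set ws \<subseteq> L}"

definition Fact :: "'x list set \<Rightarrow> 'x list set" where
  "Fact L = {w. \<exists>x y. x @ w @ y \<in> L}"

definition uncompletable :: "letter list set \<Rightarrow> letter list \<Rightarrow> bool" where
  "uncompletable L w \<longleftrightarrow> w \<notin> Fact (star L)"

definition minimal_uncompletable :: "letter list set \<Rightarrow> letter list \<Rightarrow> bool" where
  "minimal_uncompletable L w \<longleftrightarrow> uncompletable L w \<and>
     (\<forall>w'. uncompletable L w' \<longrightarrow> length w \<le> length w')"

end

theory Submission
  imports Defs
begin

lemma split_left:
  assumes "x @ r = concat ws" "\<forall>s\<in>set ws. length s \<le> k" "0<k"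
  shows "\<exists>p ws'. r = p @ concat ws' \<and> set ws' \<subseteq> set ws \<and> length p < k"
  using assms
proof (induction ws arbitrary: x)
  case Nil then show ?case by (rule_tac x="[]" in exI, rule_tac x="[]" in exI) auto
next
  case (Cons s ws0)
  from Cons.prems(1) have "x @ r = s @ concat ws0" by simp
  then obtain us where "(x = s @ us \<and> us @ r = concat ws0) \<or> (x @ us = s \<and> r = us @ concat ws0)"
    by (auto simp: append_eq_append_conv2)
  then show ?case
  proof
    assume h: "x = s @ us \<and> us @ r = concat ws0"
    then obtain p ws' where "r = p @ concat ws' \<and> set ws' \<subseteq> set ws0 \<and> length p < k"
      using Cons.IH[of us] Cons.prems by auto
    then show ?case by (rule_tac x=p in exI, rule_tac x=ws' in exI) auto
  next
    assume h: "x @ us = s \<and> r = us @ concat ws0"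
    show ?case
    proof (cases "x = []")
      case True then show ?thesis using h Cons.prems
        by (rule_tac x="[]" in exI, rule_tac x="s#ws0" in exI) auto
    next
      case False
      then have "length us < length s" using h by auto
      moreover have "length s \<le> k" using Cons.prems by auto
      ultimately show ?thesis using h
        by (rule_tac x=us in exI, rule_tac x="ws0" in exI) auto
    qed
  qed
qed

lemma split_right:
  assumes "r @ y = concat ws" "\<forall>s\<in>set ws. length s \<le> k" "0<k"
  shows "\<exists>ws' q. r = concat ws' @ q \<and> set ws' \<subseteq> set ws \<and> length q < k"
  using assms
proof (induction ws arbitrary: r)
  case Nil then show ?case by (rule_tac x="[]" in exI, rule_tac x="[]" in exI) auto
next
  case (Cons s ws0)
  from Cons.prems(1) have "r @ y = s @ concat ws0" by simp
  then obtain us where "(r = s @ us \<and> us @ y = concat ws0) \<or> (r @ us = s \<and> y = us @ concat ws0)"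
    by (auto simp: append_eq_append_conv2)
  then show ?case
  proof
    assume h: "r = s @ us \<and> us @ y = concat ws0"
    then obtain q ws' where "us = concat ws' @ q \<and> set ws' \<subseteq> set ws0 \<and> length q < k"
      using Cons.IH[of us] Cons.prems by auto
    then show ?case using h by (rule_tac x="s#ws'" in exI, rule_tac x=q in exI) auto
  next
    assume h: "r @ us = s \<and> y = us @ concat ws0"
    show ?case
    proof (cases "us = []")
      case True then show ?thesis using h Cons.prems
        by (rule_tac x="[s]" in exI, rule_tac x="[]" in exI) auto
    next
      case False
      then have "length r < length s" using h by auto
      moreover have "length s \<le> k" using Cons.prems by auto
      ultimately show ?thesis using h
        by (rule_tac x="[]" in exI, rule_tac x="r" in exI) auto
    qed
  qed
qed

definition dec :: "nat \<Rightarrow> letter list \<Rightarrow> bool" where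
  "dec k w \<longleftrightarrow> (\<exists>p ss q. w = p @ concat ss @ q \<and> set ss \<subseteq> S k \<and> length p \<le> k-1 \<and> length q \<le> k-1)"

lemma S_len: "s \<in> S k \<Longrightarrow> length s \<le> k"
  unfolding S_def by auto

lemma fact_dec:
  assumes "k \<ge> 4" "w \<in> Fact (star (S k))"
  shows "dec k w"
proof -
  obtain x y ws where e: "x @ w @ y = concat ws" and ws: "set ws \<subseteq> S k"
    using assms(2) unfolding Fact_def star_def by auto
  have L: "\<forall>s\<in>set ws. length s \<le> k" using ws S_len by auto
  have k0: "0 < k" using assms by auto
  obtain p ws1 where 1: "w @ y = p @ concat ws1" "set ws1 \<subseteq> set ws" "length p < k"
    using split_left[OF e L k0] by auto
  show ?thesis
  proof (cases "length w \<le> length p")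
    case True
    then show ?thesis unfolding dec_def
      using 1 by (rule_tac x=w in exI, rule_tac x="[]" in exI, rule_tac x="[]" in exI) auto
  next
    case False
    from 1(1) obtain us where "(w = p @ us \<and> us @ y = concat ws1) \<or> (w @ us = p \<and> y = us @ concat ws1)"
      by (auto simp: append_eq_append_conv2)
    then obtain w' where w': "w = p @ w'" "w' @ y = concat ws1" using False by auto
    have L1: "\<forall>s\<in>set ws1. length s \<le> k" using L 1 by auto
    obtain ss q where "w' = concat ss @ q" "set ss \<subseteq> set ws1" "length q < k"
      using split_right[OF w'(2) L1 k0] by auto
    then show ?thesis unfolding dec_def using w' 1 ws
      by (rule_tac x=p in exI, rule_tac x=ss in exI, rule_tac x=q in exI) auto
  qed
qed

lemma dec_fact:
  assumes "k \<ge> 4" "dec k w"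
  shows "w \<in> Fact (star (S k))"
proof -
  obtain p ss q where h: "w = p @ concat ss @ q" "set ss \<subseteq> S k" "length p \<le> k-1" "length q \<le> k-1"
    using assms(2) unfolding dec_def by auto
  define x where "x = replicate (k - length p) a"
  define y where "y = replicate (k - length q) b"
  have "x \<noteq> []" "y \<noteq> []" using h assms(1) by (auto simp: x_def y_def)
  have xp: "x @ p \<in> S k"
  proof -
    obtain n where "k - length p = Suc n" using h assms(1)
      by (rule_tac that[of "k - length p - 1"]) arith
    then have "x = a # replicate n a" by (simp add: x_def)
    moreover have "length (x@p) = k" using h assms(1) by (auto simp: x_def)
    moreover obtain m where "k - 1 = Suc m" using assms(1) by (rule_tac that[of "k - 2"]) arith
    ultimately show ?thesis unfolding S_def by auto
  qed
  have qy: "q @ y \<in> S k"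
  proof -
    obtain n where "k - length q = Suc n" using h assms(1)
      by (rule_tac that[of "k - length q - 1"]) arith
    then have "y = replicate n b @ [b]" by (simp add: y_def replicate_append_same)
    then have l: "last (q@y) = b" by simp
    have "length (q@y) = k" using h assms(1) by (auto simp: y_def)
    moreover have "q @ y \<noteq> b # replicate (k-1) a"
    proof
      assume "q @ y = b # replicate (k-1) a"
      then have "last (b # replicate (k-1) a) = b" using l by simp
      moreover have "k - 1 \<noteq> 0" using assms(1) by simp
      ultimately show False by simp
    qed
    moreover have "q @ y \<noteq> replicate (k-1) b @ [a]" using l by auto
    ultimately show ?thesis unfolding S_def by auto
  qed
  have "x @ w @ y = concat ([x@p] @ ss @ [q@y])" using h by simp
  moreover have "set ([x@p] @ ss @ [q@y]) \<subseteq> S k" using h xp qy by auto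
  ultimately show ?thesis unfolding Fact_def star_def by blast
qed

lemma rep_ne[simp]: "replicate n b @ [a] \<noteq> b # replicate n b"
  by (induction n) auto

theorem theorem2:
  fixes k :: nat and w :: "letter list"
  assumes "k \<ge> 4" and "minimal_uncompletable (S k) w"
  shows "(\<exists>z. w = (b # replicate (k-1) a) @ z) \<and> (\<exists>z. w = z @ (replicate (k-1) b @ [a]))"
proof -
  obtain n where kn: "k = Suc (Suc (Suc (Suc n)))" using assms(1)
    by (rule_tac that[of "k - 4"]) arith
  have compl: "dec k w'" if "length w' < length w" for w'
  proof -
    have "\<not> uncompletable (S k) w'" using assms(2) that unfolding minimal_uncompletable_def
      by (meson leD)
    then show ?thesis using fact_dec[OF assms(1)] unfolding uncompletable_def by blast
  qed
  have nd: "\<not> dec k w" using dec_fact[OF assms(1)] assms(2)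
    unfolding minimal_uncompletable_def uncompletable_def by blast
  have "w \<noteq> []"
  proof
    assume "w = []"
    then have "dec k w" unfolding dec_def
      by (rule_tac x="[]" in exI, rule_tac x="[]" in exI, rule_tac x="[]" in exI) auto
    then show False using nd by simp
  qed
  have P1: "\<exists>z. w = (b # replicate (k-1) a) @ z"
  proof -
    obtain c w1 where w: "w = c # w1" using \<open>w \<noteq> []\<close> by (cases w) auto
    have "dec k w1" using compl w by simp
    then obtain p ss q where h: "w1 = p @ concat ss @ q" "set ss \<subseteq> S k" "length p \<le> k-1" "length q \<le> k-1"
      unfolding dec_def by auto
    have lp: "length p = k - 1"
    proof (rule ccontr)
      assume "length p \<noteq> k - 1"
      then have "dec k w" unfolding dec_def using h w
        by (rule_tac x="c#p" in exI, rule_tac x="ss" in exI, rule_tac x="q" in exI) auto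
      then show False using nd by simp
    qed
    have uv: "c # p = b # replicate (k-1) a \<or> c # p = replicate (k-1) b @ [a]"
    proof (rule ccontr)
      assume "\<not> ?thesis"
      then have "c # p \<in> S k" using lp kn unfolding S_def by auto
      then have "dec k w" unfolding dec_def using h w
        by (rule_tac x="[]" in exI, rule_tac x="(c#p)#ss" in exI, rule_tac x="q" in exI) auto
      then show False using nd by simp
    qed
    have "c # p \<noteq> replicate (k-1) b @ [a]"
    proof
      assume e: "c # p = replicate (k-1) b @ [a]"
      have c: "c = b" and p: "p = replicate (Suc (Suc n)) b @ [a]" using e kn by auto
      have "replicate (Suc (Suc n)) b @ [a] \<in> S k" using kn unfolding S_def by auto
      then have "dec k w" unfolding dec_def using h w c p
        by (rule_tac x="[b]" in exI, rule_tac x="(replicate (Suc (Suc n)) b @ [a])#ss" in exI, rule_tac x="q" in exI) auto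
      then show False using nd by simp
    qed
    then have "c # p = b # replicate (k-1) a" using uv by simp
    then show ?thesis using w h by auto
  qed
  have P2: "\<exists>z. w = z @ (replicate (k-1) b @ [a])"
  proof -
    obtain d w1 where w: "w = w1 @ [d]" using \<open>w \<noteq> []\<close> by (cases w rule: rev_cases) auto
    have "dec k w1" using compl w by simp
    then obtain p ss q where h: "w1 = p @ concat ss @ q" "set ss \<subseteq> S k" "length p \<le> k-1" "length q \<le> k-1"
      unfolding dec_def by auto
    have lq: "length q = k - 1"
    proof (rule ccontr)
      assume "length q \<noteq> k - 1"
      then have "dec k w" unfolding dec_def using h w
        by (rule_tac x="p" in exI, rule_tac x="ss" in exI, rule_tac x="q@[d]" in exI) auto
      then show False using nd by simp
    qed
    have uv: "q @ [d] = b # replicate (k-1) a \<or> q @ [d] = replicate (k-1) b @ [a]"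
    proof (rule ccontr)
      assume "\<not> ?thesis"
      then have "q @ [d] \<in> S k" using lq kn unfolding S_def by auto
      then have "dec k w" unfolding dec_def using h w
        by (rule_tac x="p" in exI, rule_tac x="ss@[q@[d]]" in exI, rule_tac x="[]" in exI) auto
      then show False using nd by simp
    qed
    have "q @ [d] \<noteq> b # replicate (k-1) a"
    proof
      assume e: "q @ [d] = b # replicate (k-1) a"
      have "b # replicate (k-1) a = (b # replicate (Suc (Suc n)) a) @ [a]" using kn
        by (simp only: replicate_append_same append_Cons) simp
      then have d: "d = a" and q: "q = b # replicate (Suc (Suc n)) a" using e by auto
      have "b # replicate (Suc (Suc n)) a \<in> S k" using kn unfolding S_def by auto
      then have "dec k w" unfolding dec_def using h w d q
        by (rule_tac x="p" in exI, rule_tac x="ss@[b # replicate (Suc (Suc n)) a]" in exI, rule_tac x="[a]" in exI) auto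
      then show False using nd by simp
    qed
    then have "q @ [d] = replicate (k-1) b @ [a]" using uv by simp
    then show ?thesis using w h by auto
  qed
  show ?thesis using P1 P2 by blast
qed

end
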